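(* Let $P=LU$ be a profinite group with closed subgroups $L,U$, $U$ normal, and let $\exp:\mathfrak l\oplus\mathfrak u\to LU$ be a homeomorphism satisfying conditions (A) and (B), where $\mathfrak l,\mathfrak u$ are subgroups with $\exp(\mathfrak u)=U$. Let $\Omega\in LU\backslash\widehat{\mathfrak l\oplus\mathfrak u}$ correspond via the orbit method to $\tau\in\operatorname{Irr}(LU)$. Then $\tau$ is trivial on $U$ if and only if every $\psi\in\Omega$ is trivial on $\mathfrak u$.
   Context: For a profinite group $G$, an abelian profinite group $\mathfrak g$ and a homeomorphism $\exp:\mathfrak g\to G$ with inverse $\log$: (A) $\operatorname{Ad}_g(x):=\log(g\exp(x)g^{-1})$ defines an action of $G$ on $\mathfrak g$ by group automorphisms; (B) $\exp^*:\mathcal H(G)^G\to\mathcal H(\mathfrak g)^G$ (conjugation-invariant locally constant functions, convolution product) is an algebra isomorphism. Orbit method: for each irreducible smooth $\tau$ there is a unique coadjoint orbit $\Omega\subset\widehat{\mathfrak g}$ (Pontryagin dual) with $\exp^*(\operatorname{ch}_\tau)=|\Omega|^{-1/2}\sum_{\psi\in\Omega}\psi$, and $\tau\mapsto\Omega$ is a bijection $\operatorname{Irr}(G)\to G\backslash\widehat{\mathfrak g}$; $\tau$ "corresponds" to $\Omega$ in this sense. *)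

theory Defs
  imports "HOL-Analysis.Analysis" "HOL-Algebra.Coset"
begin

definition totally_disconnected_space :: "'a topology \<Rightarrow> bool" where
  "totally_disconnected_space T \<longleftrightarrow>
     (\<forall>x\<in>topspace T. connected_component_of_set T x = {x})"

definition profinite_group :: "('a, 'm) monoid_scheme \<Rightarrow> 'a topology \<Rightarrow> bool" where
  "profinite_group G T \<longleftrightarrow>
     group G \<and> topspace T = carrier G \<and>
     continuous_map (prod_topology T T) T (\<lambda>(x, y). x \<otimes>\<^bsub>G\<^esub> y) \<and>
     continuous_map T T (\<lambda>x. inv\<^bsub>G\<^esub> x) \<and>
     compact_space T \<and> Hausdorff_space T \<and> totally_disconnected_space T"

definition locally_constant :: "'a topology \<Rightarrow> ('a \<Rightarrow> 'b) \<Rightarrow> bool" where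
  "locally_constant T f \<longleftrightarrow>
     (\<forall>x\<in>topspace T. \<exists>V. openin T V \<and> x \<in> V \<and> (\<forall>y\<in>V. f y = f x))"

text \<open>For a locally constant function f on a profinite group, f is invariant under
  some open normal subgroup N, and the integral against the Haar probability measure is
  the average of f over the (finitely many) cosets of N.\<close>
definition haar_integral :: "('a, 'm) monoid_scheme \<Rightarrow> 'a topology \<Rightarrow> ('a \<Rightarrow> complex) \<Rightarrow> complex" where
  "haar_integral G T f =
     (let N = (SOME N. N \<lhd> G \<and> openin T N \<and>
                 (\<forall>x\<in>carrier G. \<forall>n\<in>N. f (x \<otimes>\<^bsub>G\<^esub> n) = f x))
      in (\<Sum>C\<in>rcosets\<^bsub>G\<^esub> N. f (SOME y. y \<in> C)) / of_nat (card (rcosets\<^bsub>G\<^esub> N)))"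

definition convolution ::
  "('a, 'm) monoid_scheme \<Rightarrow> 'a topology \<Rightarrow> ('a \<Rightarrow> complex) \<Rightarrow> ('a \<Rightarrow> complex) \<Rightarrow> 'a \<Rightarrow> complex" where
  "convolution G T f h =
     restrict (\<lambda>x. haar_integral G T (\<lambda>y. f y * h (inv\<^bsub>G\<^esub> y \<otimes>\<^bsub>G\<^esub> x))) (carrier G)"

definition log_map :: "('g, 'k) monoid_scheme \<Rightarrow> ('g \<Rightarrow> 'a) \<Rightarrow> 'a \<Rightarrow> 'g" where
  "log_map gl expm = inv_into (carrier gl) expm"

definition Ad :: "('a, 'm) monoid_scheme \<Rightarrow> ('g, 'k) monoid_scheme \<Rightarrow> ('g \<Rightarrow> 'a) \<Rightarrow> 'a \<Rightarrow> 'g \<Rightarrow> 'g" where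
  "Ad G gl expm g x = log_map gl expm (g \<otimes>\<^bsub>G\<^esub> expm x \<otimes>\<^bsub>G\<^esub> inv\<^bsub>G\<^esub> g)"

definition hecke_G_inv :: "('a, 'm) monoid_scheme \<Rightarrow> 'a topology \<Rightarrow> ('a \<Rightarrow> complex) set" where
  "hecke_G_inv G T = {f. f \<in> extensional (carrier G) \<and> locally_constant T f \<and>
      (\<forall>g\<in>carrier G. \<forall>x\<in>carrier G. f (g \<otimes>\<^bsub>G\<^esub> x \<otimes>\<^bsub>G\<^esub> inv\<^bsub>G\<^esub> g) = f x)}"

definition hecke_g_inv ::
  "('a, 'm) monoid_scheme \<Rightarrow> ('g, 'k) monoid_scheme \<Rightarrow> 'g topology \<Rightarrow> ('g \<Rightarrow> 'a) \<Rightarrow> ('g \<Rightarrow> complex) set" where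
  "hecke_g_inv G gl Tg expm = {f. f \<in> extensional (carrier gl) \<and> locally_constant Tg f \<and>
      (\<forall>g\<in>carrier G. \<forall>x\<in>carrier gl. f (Ad G gl expm g x) = f x)}"

definition pullback :: "('g, 'k) monoid_scheme \<Rightarrow> ('g \<Rightarrow> 'a) \<Rightarrow> ('a \<Rightarrow> complex) \<Rightarrow> 'g \<Rightarrow> complex" where
  "pullback gl expm f = restrict (\<lambda>x. f (expm x)) (carrier gl)"

definition condition_A :: "('a, 'm) monoid_scheme \<Rightarrow> ('g, 'k) monoid_scheme \<Rightarrow> ('g \<Rightarrow> 'a) \<Rightarrow> bool" where
  "condition_A G gl expm \<longleftrightarrow>
     (\<forall>g\<in>carrier G. Ad G gl expm g \<in> iso gl gl) \<and>
     (\<forall>x\<in>carrier gl. Ad G gl expm \<one>\<^bsub>G\<^esub> x = x) \<and>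
     (\<forall>g\<in>carrier G. \<forall>h\<in>carrier G. \<forall>x\<in>carrier gl.
        Ad G gl expm (g \<otimes>\<^bsub>G\<^esub> h) x = Ad G gl expm g (Ad G gl expm h x))"

text \<open>Condition (B): exp^* is an algebra isomorphism H(G)^G \<rightarrow> H(gl)^G
  (convolution product, normalized Haar measures).\<close>
definition condition_B ::
  "('a, 'm) monoid_scheme \<Rightarrow> 'a topology \<Rightarrow> ('g, 'k) monoid_scheme \<Rightarrow> 'g topology \<Rightarrow> ('g \<Rightarrow> 'a) \<Rightarrow> bool" where
  "condition_B G T gl Tg expm \<longleftrightarrow>
     bij_betw (pullback gl expm) (hecke_G_inv G T) (hecke_g_inv G gl Tg expm) \<and>
     (\<forall>f\<in>hecke_G_inv G T. \<forall>h\<in>hecke_G_inv G T.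
        pullback gl expm (\<lambda>x. f x + h x) = (\<lambda>x. pullback gl expm f x + pullback gl expm h x) \<and>
        pullback gl expm (convolution G T f h) =
          convolution gl Tg (pullback gl expm f) (pullback gl expm h)) \<and>
     (\<forall>c::complex. \<forall>f\<in>hecke_G_inv G T.
        pullback gl expm (\<lambda>x. c * f x) = (\<lambda>x. c * pullback gl expm f x))"

definition pontryagin_dual :: "('g, 'k) monoid_scheme \<Rightarrow> 'g topology \<Rightarrow> ('g \<Rightarrow> complex) set" where
  "pontryagin_dual gl Tg = {\<psi>. \<psi> \<in> extensional (carrier gl) \<and> continuous_map Tg euclidean \<psi> \<and>
      (\<forall>x\<in>carrier gl. cmod (\<psi> x) = 1) \<and>
      (\<forall>x\<in>carrier gl. \<forall>y\<in>carrier gl. \<psi> (x \<otimes>\<^bsub>gl\<^esub> y) = \<psi> x * \<psi> y)}"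

definition coad ::
  "('a, 'm) monoid_scheme \<Rightarrow> ('g, 'k) monoid_scheme \<Rightarrow> ('g \<Rightarrow> 'a) \<Rightarrow> 'a \<Rightarrow> ('g \<Rightarrow> complex) \<Rightarrow> 'g \<Rightarrow> complex" where
  "coad G gl expm g \<psi> = restrict (\<lambda>x. \<psi> (Ad G gl expm (inv\<^bsub>G\<^esub> g) x)) (carrier gl)"

definition coadjoint_orbits ::
  "('a, 'm) monoid_scheme \<Rightarrow> ('g, 'k) monoid_scheme \<Rightarrow> 'g topology \<Rightarrow> ('g \<Rightarrow> 'a) \<Rightarrow> ('g \<Rightarrow> complex) set set" where
  "coadjoint_orbits G gl Tg expm =
     {(\<lambda>g. coad G gl expm g \<psi>) ` carrier G | \<psi>. \<psi> \<in> pontryagin_dual gl Tg}"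

definition smooth_irreducible_rep ::
  "('a, 'm) monoid_scheme \<Rightarrow> 'a topology \<Rightarrow> ('a \<Rightarrow> complex^'n^'n) \<Rightarrow> bool" where
  "smooth_irreducible_rep G T \<rho> \<longleftrightarrow>
     \<rho> \<one>\<^bsub>G\<^esub> = mat 1 \<and>
     (\<forall>g\<in>carrier G. \<forall>h\<in>carrier G. \<rho> (g \<otimes>\<^bsub>G\<^esub> h) = \<rho> g ** \<rho> h) \<and>
     (\<forall>v. openin T {g\<in>carrier G. \<rho> g *v v = v}) \<and>
     (\<forall>W. vec.subspace W \<and> (\<forall>g\<in>carrier G. \<forall>w\<in>W. \<rho> g *v w \<in> W) \<longrightarrow>
          W = {0} \<or> W = UNIV)"

definition character :: "('a \<Rightarrow> complex^'n^'n) \<Rightarrow> 'a \<Rightarrow> complex" where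
  "character \<rho> g = trace (\<rho> g)"

definition orbit_corresponds ::
  "('g, 'k) monoid_scheme \<Rightarrow> ('g \<Rightarrow> 'a) \<Rightarrow> ('a \<Rightarrow> complex^'n^'n) \<Rightarrow> ('g \<Rightarrow> complex) set \<Rightarrow> bool" where
  "orbit_corresponds gl expm \<rho> \<Omega> \<longleftrightarrow>
     (\<forall>x\<in>carrier gl. character \<rho> (expm x) =
        complex_of_real (1 / sqrt (real (card \<Omega>))) * (\<Sum>\<psi>\<in>\<Omega>. \<psi> x))"

end

theory Submission
  imports Defs
begin

lemma ax_col: "((A::complex^'n^'n) *v axis i 1) $ j = A $ j $ i"
  by (simp add: matrix_vector_mult_def axis_def if_distrib cong: if_cong)
lemma mat_eq_axis: assumes "\<forall>i. (A::complex^'n^'n) *v axis i 1 = axis i 1" shows "A = mat 1"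
proof -
  have "A $ j $ i = axis i 1 $ j" for i j using assms ax_col by metis
  then show ?thesis by (auto simp: vec_eq_iff mat_def axis_def)
qed

lemma trace_ax: "trace (A::complex^'n^'n) = (\<Sum>i\<in>UNIV. (A *v axis i 1) $ i)"
  by (simp add: trace_def ax_col)

lemma rep_fin:
  fixes G (structure) and \<rho> :: "'a \<Rightarrow> complex^'n^'n"
  assumes pf: "profinite_group G T" and rep: "smooth_irreducible_rep G T \<rho>"
  shows "finite (\<rho> ` carrier G)"
proof -
  interpret group G using pf by (simp add: profinite_group_def)
  have top: "topspace T = carrier G" and cm: "continuous_map (prod_topology T T) T (\<lambda>(x, y). x \<otimes> y)"
    and cpt: "compact_space T" using pf by (auto simp: profinite_group_def)
  have r1: "\<rho> \<one> = mat 1" and rm: "\<And>g h. g \<in> carrier G \<Longrightarrow> h \<in> carrier G \<Longrightarrow> \<rho> (g \<otimes> h) = \<rho> g ** \<rho> h"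
    and sm: "\<And>v. openin T {g\<in>carrier G. \<rho> g *v v = v}"
    using rep by (auto simp: smooth_irreducible_rep_def)
  define S where "S = {x\<in>carrier G. \<rho> x = mat 1}"
  have "S = (\<Inter>i\<in>UNIV. {g\<in>carrier G. \<rho> g *v axis i 1 = axis i 1})"
    unfolding S_def using mat_eq_axis by fastforce
  then have So: "openin T S" using sm by (auto intro!: openin_INT2)
  define Ob where "Ob g = {x \<in> topspace T. inv g \<otimes> x \<in> S}" for g
  have Oo: "openin T (Ob g)" if g: "g \<in> carrier G" for g
  proof -
    have "continuous_map T (prod_topology T T) (\<lambda>x. (inv g, x))"
      using g top by (intro continuous_map_pairedI) auto
    then have "continuous_map T T (\<lambda>x. inv g \<otimes> x)"
      using continuous_map_compose[OF _ cm, of T "\<lambda>x. (inv g, x)"] by (simp add: o_def)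
    then show ?thesis unfolding Ob_def using So by (rule openin_continuous_map_preimage)
  qed
  have Oeq: "\<rho> x = \<rho> g" if g: "g \<in> carrier G" and x: "x \<in> Ob g" for g x
  proof -
    have xc: "x \<in> carrier G" and "\<rho> (inv g \<otimes> x) = mat 1" using x top by (auto simp: Ob_def S_def)
    then have a: "\<rho> (inv g) ** \<rho> x = mat 1" using rm g by simp
    have "\<rho> g = \<rho> g ** (\<rho> (inv g) ** \<rho> x)" by (simp add: a matrix_mul_rid)
    also have "\<dots> = \<rho> (g \<otimes> inv g) ** \<rho> x" using rm[of g "inv g"] g by (simp add: matrix_mul_assoc)
    also have "\<dots> = \<rho> x" using g r1 by (simp add: matrix_mul_lid)
    finally show ?thesis by simp
  qed
  have gO: "g \<in> Ob g" if "g \<in> carrier G" for g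
    using that top r1 by (simp add: Ob_def S_def)
  have "carrier G \<subseteq> \<Union>(Ob ` carrier G)" using gO by blast
  then obtain F where F: "finite F" "F \<subseteq> Ob ` carrier G" "carrier G \<subseteq> \<Union>F"
    using cpt Oo top unfolding compact_space_def compactin_def by (metis imageE)
  then obtain F' where F': "F' \<subseteq> carrier G" "finite F'" "F = Ob ` F'"
    by (meson finite_subset_image)
  have "\<rho> ` carrier G \<subseteq> \<rho> ` F'"
  proof
    fix y assume "y \<in> \<rho> ` carrier G"
    then obtain x where x: "x \<in> carrier G" "y = \<rho> x" by auto
    then obtain g where "g \<in> F'" "x \<in> Ob g" using F F' by auto
    then show "y \<in> \<rho> ` F'" using Oeq F' x by auto
  qed
  then show ?thesis using F' finite_subset by blast
qed

lemma unit_sum: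
  fixes f :: "'b \<Rightarrow> complex"
  assumes A: "finite A" and u: "\<forall>a\<in>A. cmod (f a) = 1" and s: "sum f A = of_nat (card A)"
  shows "\<forall>a\<in>A. f a = 1"
proof -
  have "Re (sum f A) = real (card A)" using s by simp
  then have "(\<Sum>a\<in>A. Re (f a)) = (\<Sum>a\<in>A. 1)" by (simp add: Re_sum)
  then have "(\<Sum>a\<in>A. 1 - Re (f a)) = 0" by (simp add: sum_subtractf)
  moreover have "\<forall>a\<in>A. 0 \<le> 1 - Re (f a)" using u complex_Re_le_cmod by (metis diff_ge_0_iff_ge)
  ultimately have "\<forall>a\<in>A. 1 - Re (f a) = 0" using sum_nonneg_eq_0_iff[OF A, of "\<lambda>a. 1 - Re (f a)"] by simp
  then have re: "\<forall>a\<in>A. Re (f a) = 1" by simp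
  show ?thesis
  proof
    fix a assume a: "a \<in> A"
    have "cmod (f a) ^ 2 = Re (f a) ^ 2 + Im (f a) ^ 2" by (rule cmod_power2)
    then have "1 = 1 + Im (f a) ^ 2" using u re a by (metis one_power2)
    then have "Im (f a) = 0" by simp
    then show "f a = 1" using re a by (simp add: complex_eq_iff)
  qed
qed
lemma lin_sum_mv: "(A::complex^'n^'n) *v (\<Sum>h\<in>H. f h) = (\<Sum>h\<in>H. A *v f h)"
  by (induction H rule: infinite_finite_induct) (simp_all add: matrix_vector_right_distrib)

theorem mainTheorem9:
  fixes P :: "('a, 'm) monoid_scheme" and TP :: "'a topology"
    and gl :: "('g, 'k) monoid_scheme" and Tg :: "'g topology"
    and L U :: "'a set" and ll uu :: "'g set"
    and expm :: "'g \<Rightarrow> 'a"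
    and \<rho> :: "'a \<Rightarrow> complex^'n^'n" and \<Omega> :: "('g \<Rightarrow> complex) set"
  assumes P_prof: "profinite_group P TP"
    and L_sub: "subgroup L P" and L_closed: "closedin TP L"
    and U_norm: "U \<lhd> P" and U_closed: "closedin TP U"
    and P_LU: "carrier P = L <#>\<^bsub>P\<^esub> U"
    and g_prof: "profinite_group gl Tg" and g_comm: "comm_group gl"
    and ll_sub: "subgroup ll gl" and ll_closed: "closedin Tg ll"
    and uu_sub: "subgroup uu gl" and uu_closed: "closedin Tg uu"
    and g_sum: "carrier gl = ll <#>\<^bsub>gl\<^esub> uu" and g_direct: "ll \<inter> uu = {\<one>\<^bsub>gl\<^esub>}"
    and exp_homeo: "homeomorphic_map Tg TP expm"
    and exp_uu: "expm ` uu = U"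
    and condA: "condition_A P gl expm"
    and condB: "condition_B P TP gl Tg expm"
    and \<Omega>_orbit: "\<Omega> \<in> coadjoint_orbits P gl Tg expm"
    and \<tau>_irr: "smooth_irreducible_rep P TP \<rho>"
    and corr: "orbit_corresponds gl expm \<rho> \<Omega>"
  shows "(\<forall>u\<in>U. \<rho> u = mat 1) \<longleftrightarrow> (\<forall>\<psi>\<in>\<Omega>. \<forall>x\<in>uu. \<psi> x = 1)"
proof -
  interpret P: group P using P_prof by (simp add: profinite_group_def)
  have grp_gl: "group gl" using g_prof by (simp add: profinite_group_def)
  have topP: "topspace TP = carrier P" using P_prof by (simp add: profinite_group_def)
  have topg: "topspace Tg = carrier gl" using g_prof by (simp add: profinite_group_def)
  have surj: "expm ` carrier gl = carrier P"
    using homeomorphic_imp_surjective_map[OF exp_homeo] topP topg by simp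
  have r1: "\<rho> \<one>\<^bsub>P\<^esub> = mat 1"
    and rm: "\<And>g h. g \<in> carrier P \<Longrightarrow> h \<in> carrier P \<Longrightarrow> \<rho> (g \<otimes>\<^bsub>P\<^esub> h) = \<rho> g ** \<rho> h"
    and irr: "\<And>W. vec.subspace W \<Longrightarrow> (\<forall>g\<in>carrier P. \<forall>w\<in>W. \<rho> g *v w \<in> W) \<Longrightarrow> W = {0} \<or> W = UNIV"
    using \<tau>_irr by (auto simp: smooth_irreducible_rep_def)
  have fin: "finite (\<rho> ` carrier P)" by (rule rep_fin[OF P_prof \<tau>_irr])
  obtain \<psi>0 where psi0: "\<psi>0 \<in> pontryagin_dual gl Tg"
    and Om: "\<Omega> = (\<lambda>g. coad P gl expm g \<psi>0) ` carrier P"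
    using \<Omega>_orbit by (auto simp: coadjoint_orbits_def)
  have p0u: "\<And>x. x \<in> carrier gl \<Longrightarrow> cmod (\<psi>0 x) = 1"
    and p0m: "\<And>x y. x \<in> carrier gl \<Longrightarrow> y \<in> carrier gl \<Longrightarrow> \<psi>0 (x \<otimes>\<^bsub>gl\<^esub> y) = \<psi>0 x * \<psi>0 y"
    using psi0 by (auto simp: pontryagin_dual_def)
  have p01: "\<psi>0 \<one>\<^bsub>gl\<^esub> = 1"
  proof -
    have oc: "\<one>\<^bsub>gl\<^esub> \<in> carrier gl" using grp_gl by (simp add: group.is_monoid monoid.one_closed)
    have "\<psi>0 \<one>\<^bsub>gl\<^esub> = \<psi>0 \<one>\<^bsub>gl\<^esub> * \<psi>0 \<one>\<^bsub>gl\<^esub>"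
      using p0m[OF oc oc] grp_gl by (simp add: group.is_monoid monoid.l_one[OF _ oc])
    moreover have "\<psi>0 \<one>\<^bsub>gl\<^esub> \<noteq> 0" using p0u[OF oc] by auto
    ultimately show ?thesis by (metis mult_cancel_left1)
  qed
  have Adiso: "\<And>g. g \<in> carrier P \<Longrightarrow> Ad P gl expm g \<in> iso gl gl"
    using condA by (simp add: condition_A_def)
  have psi_unit: "cmod (\<psi> x) = 1" if pO: "\<psi> \<in> \<Omega>" and xc: "x \<in> carrier gl" for \<psi> x
  proof -
    obtain g where g: "g \<in> carrier P" "\<psi> = coad P gl expm g \<psi>0" using pO Om by auto
    have "Ad P gl expm (inv\<^bsub>P\<^esub> g) \<in> hom gl gl" using Adiso[of "inv\<^bsub>P\<^esub> g"] g by (simp add: iso_def)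
    then have "Ad P gl expm (inv\<^bsub>P\<^esub> g) x \<in> carrier gl" using xc by (rule hom_in_carrier)
    then show ?thesis using g xc p0u by (simp add: coad_def)
  qed
  have psi_one: "\<psi> \<one>\<^bsub>gl\<^esub> = 1" if pO: "\<psi> \<in> \<Omega>" for \<psi>
  proof -
    obtain g where g: "g \<in> carrier P" "\<psi> = coad P gl expm g \<psi>0" using pO Om by auto
    have "Ad P gl expm (inv\<^bsub>P\<^esub> g) \<in> hom gl gl" using Adiso[of "inv\<^bsub>P\<^esub> g"] g by (simp add: iso_def)
    then have "Ad P gl expm (inv\<^bsub>P\<^esub> g) \<one>\<^bsub>gl\<^esub> = \<one>\<^bsub>gl\<^esub>" using grp_gl by (simp add: hom_one)
    moreover have "\<one>\<^bsub>gl\<^esub> \<in> carrier gl" using grp_gl by (simp add: group.is_monoid monoid.one_closed)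
    ultimately show ?thesis using g p01 by (simp add: coad_def)
  qed
  define c where "c = complex_of_real (1 / sqrt (real (card \<Omega>)))"
  have ch: "trace (\<rho> (expm x)) = c * (\<Sum>\<psi>\<in>\<Omega>. \<psi> x)" if "x \<in> carrier gl" for x
    using corr that by (simp add: orbit_corresponds_def character_def c_def)
  obtain y where y: "y \<in> carrier gl" "expm y = \<one>\<^bsub>P\<^esub>" using surj P.one_closed by (metis imageE)
  have c0: "c \<noteq> 0"
  proof
    assume "c = 0"
    then have "trace (\<rho> (expm y)) = 0" using ch[OF y(1)] by simp
    then show False using y r1 by (simp add: trace_I)
  qed
  have cardpos: "card \<Omega> > 0"
  proof (rule ccontr)
    assume "\<not> card \<Omega> > 0" then have "card \<Omega> = 0" by simp
    then show False using c0 by (simp add: c_def)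
  qed
  then have finO: "finite \<Omega>" by (simp add: card_gt_0_iff)
  define m where "m = card \<Omega>"
  have uu_car: "uu \<subseteq> carrier gl" using uu_sub by (rule subgroup.subset)
  have one_uu: "\<one>\<^bsub>gl\<^esub> \<in> uu" using uu_sub by (rule subgroup.one_closed)
  have Usub: "subgroup U P" using U_norm by (rule normal_imp_subgroup)
  have U_car: "U \<subseteq> carrier P" using Usub by (rule subgroup.subset)
  have sum_one: "(\<Sum>\<psi>\<in>\<Omega>. \<psi> \<one>\<^bsub>gl\<^esub>) = of_nat m"
  proof -
    have "(\<Sum>\<psi>\<in>\<Omega>. \<psi> \<one>\<^bsub>gl\<^esub>) = (\<Sum>\<psi>\<in>\<Omega>. 1)" using psi_one by (intro sum.cong) auto
    then show ?thesis by (simp add: m_def)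
  qed
  show ?thesis
  proof
    assume triv: "\<forall>u\<in>U. \<rho> u = mat 1"
    have tr1: "trace (\<rho> (expm x)) = of_nat CARD('n)" if "x \<in> uu" for x
    proof -
      have "expm x \<in> U" using exp_uu that by blast
      then show ?thesis using triv by (simp add: trace_I)
    qed
    have cm: "of_nat CARD('n) = c * of_nat m"
      using tr1[OF one_uu] ch[of "\<one>\<^bsub>gl\<^esub>"] one_uu uu_car sum_one by auto
    show "\<forall>\<psi>\<in>\<Omega>. \<forall>x\<in>uu. \<psi> x = 1"
    proof (intro ballI)
      fix \<psi> x assume p: "\<psi> \<in> \<Omega>" and x: "x \<in> uu"
      have "c * (\<Sum>\<psi>\<in>\<Omega>. \<psi> x) = c * of_nat m" using ch[of x] tr1[OF x] x uu_car cm by auto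
      then have "(\<Sum>\<psi>\<in>\<Omega>. \<psi> x) = of_nat (card \<Omega>)" using c0 m_def by simp
      then have "\<forall>\<psi>\<in>\<Omega>. \<psi> x = 1"
        using unit_sum[OF finO, of "\<lambda>\<psi>. \<psi> x"] psi_unit x uu_car by blast
      then show "\<psi> x = 1" using p by blast
    qed
  next
    assume triv: "\<forall>\<psi>\<in>\<Omega>. \<forall>x\<in>uu. \<psi> x = 1"
    define t where "t = c * of_nat m"
    have t0: "t \<noteq> 0" using c0 cardpos by (simp add: t_def m_def)
    have trU: "trace (\<rho> u) = t" if "u \<in> U" for u
    proof -
      obtain x where x: "x \<in> uu" "u = expm x" using \<open>u \<in> U\<close> exp_uu by blast
      have "(\<Sum>\<psi>\<in>\<Omega>. \<psi> x) = (\<Sum>\<psi>\<in>\<Omega>. 1)" using triv x by (intro sum.cong) auto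
      then show ?thesis using ch[of x] x uu_car by (auto simp: t_def m_def)
    qed
    define H where "H = \<rho> ` U"
    have finH: "finite H" unfolding H_def using fin U_car by (meson finite_subset image_mono)
    define W where "W = {v. \<forall>u\<in>U. \<rho> u *v v = v}"
    have sc: "A *v (a *s v) = a *s (A *v v)" for A :: "complex^'n^'n" and a v
      by (simp add: vec_eq_iff matrix_vector_mult_def sum_distrib_left mult.left_commute)
    have sub: "vec.subspace W"
      unfolding vec.subspace_def W_def by (auto simp: matrix_vector_right_distrib sc)
    have invu: "\<rho> (inv\<^bsub>P\<^esub> u) ** \<rho> u = mat 1" if "u \<in> carrier P" for u
      using rm[of "inv\<^bsub>P\<^esub> u" u] that r1 by simp
    have Winv: "\<forall>g\<in>carrier P. \<forall>w\<in>W. \<rho> g *v w \<in> W"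
    proof (intro ballI)
      fix g w assume g: "g \<in> carrier P" and w: "w \<in> W"
      show "\<rho> g *v w \<in> W" unfolding W_def
      proof (intro CollectI ballI)
        fix u assume u: "u \<in> U"
        have uc: "u \<in> carrier P" using u U_car by blast
        define k where "k = inv\<^bsub>P\<^esub> g \<otimes>\<^bsub>P\<^esub> u \<otimes>\<^bsub>P\<^esub> g"
        have kU: "k \<in> U" unfolding k_def using normal.inv_op_closed1[OF U_norm g u] .
        have kc: "k \<in> carrier P" using kU U_car by blast
        have "g \<otimes>\<^bsub>P\<^esub> k = u \<otimes>\<^bsub>P\<^esub> g" unfolding k_def using g uc
          by (simp add: P.m_assoc[symmetric] P.r_inv)
        then have "\<rho> g ** \<rho> k = \<rho> u ** \<rho> g" using rm g kc uc by metis
        then have "\<rho> u *v (\<rho> g *v w) = \<rho> g *v (\<rho> k *v w)" by (simp add: matrix_vector_mul_assoc)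
        also have "\<dots> = \<rho> g *v w" using w kU by (simp add: W_def)
        finally show "\<rho> u *v (\<rho> g *v w) = \<rho> g *v w" .
      qed
    qed
    have Wcases: "W = {0} \<or> W = UNIV" by (rule irr[OF sub Winv])
    have avg: "(\<Sum>h\<in>H. h *v v) \<in> W" for v
      unfolding W_def
    proof (intro CollectI ballI)
      fix u assume u: "u \<in> U"
      have uc: "u \<in> carrier P" using u U_car by blast
      have img: "(\<lambda>h. \<rho> u ** h) ` H \<subseteq> H"
      proof
        fix z assume "z \<in> (\<lambda>h. \<rho> u ** h) ` H"
        then obtain u' where u': "u' \<in> U" "z = \<rho> u ** \<rho> u'" unfolding H_def by auto
        then have "z = \<rho> (u \<otimes>\<^bsub>P\<^esub> u')" using rm uc U_car by auto
        moreover have "u \<otimes>\<^bsub>P\<^esub> u' \<in> U" using Usub u u'(1) by (rule subgroup.m_closed)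
        ultimately show "z \<in> H" unfolding H_def by blast
      qed
      have inj: "inj_on (\<lambda>h. \<rho> u ** h) H"
      proof
        fix h1 h2 assume "\<rho> u ** h1 = \<rho> u ** h2"
        then have "\<rho> (inv\<^bsub>P\<^esub> u) ** (\<rho> u ** h1) = \<rho> (inv\<^bsub>P\<^esub> u) ** (\<rho> u ** h2)" by simp
        then show "h1 = h2" using invu[OF uc] by (simp add: matrix_mul_assoc matrix_mul_lid)
      qed
      have eqH: "(\<lambda>h. \<rho> u ** h) ` H = H" by (rule endo_inj_surj[OF finH img inj])
      have "\<rho> u *v (\<Sum>h\<in>H. h *v v) = (\<Sum>h\<in>H. \<rho> u *v (h *v v))" by (rule lin_sum_mv)
      also have "\<dots> = (\<Sum>h\<in>H. (\<rho> u ** h) *v v)" by (simp add: matrix_vector_mul_assoc)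
      also have "\<dots> = (\<Sum>h\<in>(\<lambda>h. \<rho> u ** h) ` H. h *v v)" by (simp add: sum.reindex[OF inj])
      also have "\<dots> = (\<Sum>h\<in>H. h *v v)" by (simp only: eqH)
      finally show "\<rho> u *v (\<Sum>h\<in>H. h *v v) = (\<Sum>h\<in>H. h *v v)" .
    qed
    from Wcases show "\<forall>u\<in>U. \<rho> u = mat 1"
    proof
      assume "W = {0}"
      then have z: "(\<Sum>h\<in>H. h *v v) = 0" for v using avg by blast
      have "(\<Sum>h\<in>H. trace h) = (\<Sum>h\<in>H. \<Sum>i\<in>UNIV. (h *v axis i 1) $ i)" by (simp add: trace_ax)
      also have "\<dots> = (\<Sum>i\<in>UNIV. (\<Sum>h\<in>H. h *v axis i 1) $ i)" by (subst sum.swap) simp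
      also have "\<dots> = 0" using z by simp
      finally have s0: "(\<Sum>h\<in>H. trace h) = 0" .
      have "(\<Sum>h\<in>H. trace h) = (\<Sum>h\<in>H. t)" using trU by (intro sum.cong) (auto simp: H_def)
      also have "\<dots> = of_nat (card H) * t" by simp
      finally have s1: "(\<Sum>h\<in>H. trace h) = of_nat (card H) * t" .
      have "\<one>\<^bsub>P\<^esub> \<in> U" using Usub by (rule subgroup.one_closed)
      then have "H \<noteq> {}" by (auto simp: H_def)
      then have "card H \<noteq> 0" using finH by simp
      then show ?thesis using s0 s1 t0 by simp
    next
      assume "W = UNIV"
      then show ?thesis unfolding W_def by (auto simp: matrix_eq)
    qed
  qed
qed

end
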